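(* Let \(\mathcal{I}\) be an instance of 3-SAT and let \(G(\mathcal{I})\), \(T(\mathcal{I})\) be as constructed below. If an MNS ordering or an MCS ordering \(\sigma\) of \(G(\mathcal{I})\) has \(\mathcal{F}\)-tree \(T(\mathcal{I})\), then in \(\sigma\) the vertex \(b\) appears before every clause vertex \(c_i\).
   Context: Let \(\mathcal{I}\) have variables \(x_1,\dots,x_k\) and clauses \(C_1,\dots,C_l\), each a disjunction of three literals. \(G(\mathcal{I})\) has vertices: literal vertices \(X=\{x_1,\dots,x_k,\overline{x_1},\dots,\overline{x_k}\}\), clause vertices \(c_1,\dots,c_l\), and six vertices \(r,p,q,a,b,t\). Edges: any two vertices of \(X\) are adjacent except the pairs \(x_j\overline{x_j}\); the clause vertices are pairwise nonadjacent; \(c_i\) is adjacent to every vertex of \(X\) except the three literal vertices of the literals of \(C_i\); each of \(r,p,q,a\) is adjacent to all literal vertices and all clause vertices; \(b\) is adjacent to all literal vertices; additionally the edges \(ab,ap,aq,bq,br,bt,pr,qr,qt\); no other edges. \(T(\mathcal{I})\) is the spanning tree consisting of all edges of \(G(\mathcal{I})\) incident to \(r\) together with the edges \(pa\) and \(bt\). With \(n\) the number of vertices: an MCS ordering is produced by repeatedly choosing an unnumbered vertex with the largest number of numbered neighbors; an MNS ordering uses set labels (all \(\emptyset\), start vertex gets \(\{n+1\}\); repeatedly pick an unnumbered vertex with inclusion-maximal label as \(v_j\) and add \(j\) to the labels of its unnumbered neighbors); ties are arbitrary. The \(\mathcal{F}\)-tree of an ordering \((v_1,\dots,v_n)\)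 has, for each \(v\ne v_1\), an edge from \(v\) to its leftmost neighbor in the ordering. *)

theory Defs
  imports Main
begin

text \<open>A graph is given by a vertex set V and a symmetric adjacency predicate adj.
An ordering is a list enumerating V without repetition; position 0 is v_1.\<close>

definition is_ordering :: "'v set \<Rightarrow> 'v list \<Rightarrow> bool" where
  "is_ordering V \<sigma> \<longleftrightarrow> distinct \<sigma> \<and> set \<sigma> = V"

definition numbered_nbrs :: "('v \<Rightarrow> 'v \<Rightarrow> bool) \<Rightarrow> 'v list \<Rightarrow> nat \<Rightarrow> 'v \<Rightarrow> nat set" where
  "numbered_nbrs adj \<sigma> j w = {i. i < j \<and> adj w (\<sigma> ! i)}"

definition is_MCS :: "'v set \<Rightarrow> ('v \<Rightarrow> 'v \<Rightarrow> bool) \<Rightarrow> 'v list \<Rightarrow> bool" where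
  "is_MCS V adj \<sigma> \<longleftrightarrow> is_ordering V \<sigma> \<and>
     (\<forall>j < length \<sigma>. \<forall>w \<in> V - set (take j \<sigma>).
        card (numbered_nbrs adj \<sigma> j w) \<le> card (numbered_nbrs adj \<sigma> j (\<sigma> ! j)))"

text \<open>MNS: the label of an unnumbered vertex before step j is the set of positions of its
numbered neighbours (the extra element n+1 of the start vertex only matters at step 1,
where it just allows an arbitrary start vertex).\<close>
definition is_MNS :: "'v set \<Rightarrow> ('v \<Rightarrow> 'v \<Rightarrow> bool) \<Rightarrow> 'v list \<Rightarrow> bool" where
  "is_MNS V adj \<sigma> \<longleftrightarrow> is_ordering V \<sigma> \<and>
     (\<forall>j < length \<sigma>. \<forall>w \<in> V - set (take j \<sigma>).
        \<not> (numbered_nbrs adj \<sigma> j (\<sigma> ! j) \<subset> numbered_nbrs adj \<sigma> j w))"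

definition leftmost_nbr :: "('v \<Rightarrow> 'v \<Rightarrow> bool) \<Rightarrow> 'v list \<Rightarrow> 'v \<Rightarrow> 'v" where
  "leftmost_nbr adj \<sigma> v = \<sigma> ! (LEAST i. i < length \<sigma> \<and> adj v (\<sigma> ! i))"

definition F_tree :: "('v \<Rightarrow> 'v \<Rightarrow> bool) \<Rightarrow> 'v list \<Rightarrow> 'v set set" where
  "F_tree adj \<sigma> = {{v, leftmost_nbr adj \<sigma> v} | v. v \<in> set \<sigma> \<and> v \<noteq> hd \<sigma>}"

datatype vert = Pos nat | Neg nat | Cl nat | Rv | Pv | Qv | Av | Bv | Tv

type_synonym literal = "nat \<times> bool"

fun lit_vert :: "literal \<Rightarrow> vert" where
  "lit_vert (j, True) = Pos j"
| "lit_vert (j, False) = Neg j"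

definition sat3_instance :: "nat \<Rightarrow> nat \<Rightarrow> (nat \<Rightarrow> literal list) \<Rightarrow> bool" where
  "sat3_instance k l C \<longleftrightarrow>
     (\<forall>i \<in> {1..l}. length (C i) = 3 \<and> (\<forall>(j, s) \<in> set (C i). j \<in> {1..k}))"

definition lit_verts :: "nat \<Rightarrow> vert set" where
  "lit_verts k = Pos ` {1..k} \<union> Neg ` {1..k}"

definition cl_verts :: "nat \<Rightarrow> vert set" where
  "cl_verts l = Cl ` {1..l}"

definition GV :: "nat \<Rightarrow> nat \<Rightarrow> vert set" where
  "GV k l = lit_verts k \<union> cl_verts l \<union> {Rv, Pv, Qv, Av, Bv, Tv}"

fun complementary :: "vert \<Rightarrow> vert \<Rightarrow> bool" where
  "complementary (Pos j) (Neg j') = (j = j')"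
| "complementary (Neg j) (Pos j') = (j = j')"
| "complementary _ _ = False"

text \<open>One direction of the edge set; adjacency is its symmetric closure on GV.\<close>
definition E0 :: "nat \<Rightarrow> nat \<Rightarrow> (nat \<Rightarrow> literal list) \<Rightarrow> vert \<Rightarrow> vert \<Rightarrow> bool" where
  "E0 k l C u v \<longleftrightarrow>
     (u \<in> lit_verts k \<and> v \<in> lit_verts k \<and> u \<noteq> v \<and> \<not> complementary u v)
   \<or> (\<exists>i \<in> {1..l}. u = Cl i \<and> v \<in> lit_verts k \<and> v \<notin> lit_vert ` set (C i))
   \<or> (u \<in> {Rv, Pv, Qv, Av} \<and> v \<in> lit_verts k \<union> cl_verts l)
   \<or> (u = Bv \<and> v \<in> lit_verts k)
   \<or> (u, v) \<in> {(Av, Bv), (Av, Pv), (Av, Qv), (Bv, Qv), (Bv, Rv), (Bv, Tv),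
                (Pv, Rv), (Qv, Rv), (Qv, Tv)}"

definition Gadj :: "nat \<Rightarrow> nat \<Rightarrow> (nat \<Rightarrow> literal list) \<Rightarrow> vert \<Rightarrow> vert \<Rightarrow> bool" where
  "Gadj k l C u v \<longleftrightarrow> u \<in> GV k l \<and> v \<in> GV k l \<and> (E0 k l C u v \<or> E0 k l C v u)"

definition Ttree :: "nat \<Rightarrow> nat \<Rightarrow> (nat \<Rightarrow> literal list) \<Rightarrow> vert set set" where
  "Ttree k l C = {{Rv, v} | v. Gadj k l C Rv v} \<union> {{Pv, Av}, {Bv, Tv}}"

end

theory Submission
  imports Defs
begin

lemma adjTQ: "Gadj k l C Tv Qv"
  by (simp add: Gadj_def E0_def GV_def)

lemma nadjRT: "\<not> Gadj k l C Rv Tv"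
  unfolding Gadj_def E0_def lit_verts_def cl_verts_def by blast

lemma nadjBCl: "\<not> Gadj k l C Bv (Cl i)"
  by (auto simp add: Gadj_def E0_def GV_def lit_verts_def cl_verts_def)

lemma adjQCl: "i \<in> {1..l} \<Longrightarrow> Gadj k l C Qv (Cl i)"
  by (auto simp add: Gadj_def E0_def GV_def lit_verts_def cl_verts_def)

lemma adjBQ: "Gadj k l C Bv x \<Longrightarrow> x \<noteq> Qv \<Longrightarrow> Gadj k l C Qv x"
  by (auto simp add: Gadj_def E0_def GV_def lit_verts_def cl_verts_def)

lemma inGV: "Tv \<in> GV k l" "Qv \<in> GV k l" "Bv \<in> GV k l"
  by (auto simp: GV_def)

lemma lm_props:
  assumes "i0 < length \<sigma>" "adj v (\<sigma> ! i0)"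
  shows "\<exists>m. m \<le> i0 \<and> m < length \<sigma> \<and> leftmost_nbr adj \<sigma> v = \<sigma> ! m"
proof -
  define P where "P = (\<lambda>i. i < length \<sigma> \<and> adj v (\<sigma> ! i))"
  have P: "P i0" using assms by (simp add: P_def)
  define m where "m = (LEAST i. P i)"
  have "P m" unfolding m_def by (rule LeastI[of P, OF P])
  hence m1: "m < length \<sigma>" by (simp add: P_def)
  have m2: "m \<le> i0" unfolding m_def by (rule Least_le[of P, OF P])
  have m3: "leftmost_nbr adj \<sigma> v = \<sigma> ! m" unfolding leftmost_nbr_def m_def P_def by (rule refl)
  show ?thesis using m1 m2 m3 by blast
qed

theorem lemma9:
  fixes k l :: nat and C :: "nat \<Rightarrow> literal list" and \<sigma> :: "vert list"
  assumes "sat3_instance k l C"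
    and "is_MNS (GV k l) (Gadj k l C) \<sigma> \<or> is_MCS (GV k l) (Gadj k l C) \<sigma>"
    and "F_tree (Gadj k l C) \<sigma> = Ttree k l C"
  shows "\<forall>i \<in> {1..l}. \<forall>a < length \<sigma>. \<forall>c < length \<sigma>.
           \<sigma> ! a = Bv \<longrightarrow> \<sigma> ! c = Cl i \<longrightarrow> a < c"
proof (intro ballI allI impI, rule ccontr)
  fix i a c
  assume i: "i \<in> {1..l}" and a: "a < length \<sigma>" and c: "c < length \<sigma>"
    and sa: "\<sigma> ! a = Bv" and sc: "\<sigma> ! c = Cl i" and nlt: "\<not> a < c"
  let ?adj = "Gadj k l C"
  have ord: "is_ordering (GV k l) \<sigma>" using assms(2) by (auto simp: is_MNS_def is_MCS_def)
  hence dist: "distinct \<sigma>" and setV: "set \<sigma> = GV k l" by (auto simp: is_ordering_def)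
  have "Qv \<in> set \<sigma>" using setV inGV by auto
  then obtain q where q: "q < length \<sigma>" "\<sigma> ! q = Qv" by (auto simp: in_set_conv_nth)
  have "Tv \<in> set \<sigma>" using setV inGV by auto
  then obtain t where t: "t < length \<sigma>" "\<sigma> ! t = Tv" by (auto simp: in_set_conv_nth)
  have ne: "\<sigma> \<noteq> []" using q by auto
  have tree: "\<And>v. v \<in> set \<sigma> \<Longrightarrow> v \<noteq> hd \<sigma> \<Longrightarrow> {v, leftmost_nbr ?adj \<sigma> v} \<in> Ttree k l C"
    using assms(3) unfolding F_tree_def by blast
  have tnhd: "Tv \<noteq> hd \<sigma>"
  proof
    assume th: "Tv = hd \<sigma>"
    hence s0: "\<sigma> ! 0 = Tv" using ne by (simp add: hd_conv_nth)
    have "Qv \<noteq> hd \<sigma>" using th by auto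
    hence "{Qv, leftmost_nbr ?adj \<sigma> Qv} \<in> Ttree k l C" using tree \<open>Qv \<in> set \<sigma>\<close> by blast
    moreover have "leftmost_nbr ?adj \<sigma> Qv = Tv"
    proof -
      have "?adj Qv (\<sigma> ! 0)" using s0 adjTQ by (auto simp: Gadj_def)
      from lm_props[of 0 \<sigma> ?adj Qv, OF _ this] ne s0 show ?thesis by auto
    qed
    ultimately have "{Qv, Tv} \<in> Ttree k l C" by simp
    thus False using nadjRT by (auto simp: Ttree_def doubleton_eq_iff Gadj_def)
  qed
  have "{Tv, leftmost_nbr ?adj \<sigma> Tv} \<in> Ttree k l C" using tree \<open>Tv \<in> set \<sigma>\<close> tnhd by blast
  hence lmt: "leftmost_nbr ?adj \<sigma> Tv = Bv"
    using nadjRT by (auto simp: Ttree_def doubleton_eq_iff Gadj_def)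
  obtain m where m: "m \<le> q" "m < length \<sigma>" "leftmost_nbr ?adj \<sigma> Tv = \<sigma> ! m"
    using lm_props[of q \<sigma> ?adj Tv] q adjTQ by auto
  have "\<sigma> ! m = \<sigma> ! a" using m lmt sa by simp
  hence "m = a" using m a dist by (simp add: nth_eq_iff_index_eq)
  hence aq: "a < q" using m q sa by (metis le_neq_implies_less vert.distinct)
  have ca: "c < a" using nlt sa sc by (metis linorder_neqE_nat vert.distinct)
  have qnot: "Qv \<in> GV k l - set (take a \<sigma>)"
  proof -
    have "Qv \<notin> set (take a \<sigma>)"
    proof
      assume "Qv \<in> set (take a \<sigma>)"
      then obtain x where "x < length (take a \<sigma>)" "take a \<sigma> ! x = Qv" by (auto simp: in_set_conv_nth)
      hence "x < a" "\<sigma> ! x = Qv" by auto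
      thus False using q dist aq a by (metis nth_eq_iff_index_eq order.strict_trans nat_neq_iff)
    qed
    thus ?thesis using inGV by auto
  qed
  have sub: "numbered_nbrs ?adj \<sigma> a Bv \<subset> numbered_nbrs ?adj \<sigma> a Qv"
  proof
    show "numbered_nbrs ?adj \<sigma> a Bv \<subseteq> numbered_nbrs ?adj \<sigma> a Qv"
    proof
      fix x assume "x \<in> numbered_nbrs ?adj \<sigma> a Bv"
      hence x: "x < a" "?adj Bv (\<sigma> ! x)" by (auto simp: numbered_nbrs_def)
      have "\<sigma> ! x \<noteq> Qv" using x q dist aq a by (metis nth_eq_iff_index_eq order.strict_trans nat_neq_iff)
      thus "x \<in> numbered_nbrs ?adj \<sigma> a Qv" using x adjBQ by (auto simp: numbered_nbrs_def)
    qed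
    have "c \<in> numbered_nbrs ?adj \<sigma> a Qv" "c \<notin> numbered_nbrs ?adj \<sigma> a Bv"
      using ca sc adjQCl[OF i] nadjBCl by (auto simp: numbered_nbrs_def)
    thus "numbered_nbrs ?adj \<sigma> a Bv \<noteq> numbered_nbrs ?adj \<sigma> a Qv" by blast
  qed
  show False
    using assms(2)
  proof
    assume "is_MNS (GV k l) ?adj \<sigma>"
    hence "\<not> (numbered_nbrs ?adj \<sigma> a (\<sigma> ! a) \<subset> numbered_nbrs ?adj \<sigma> a Qv)"
      using a qnot unfolding is_MNS_def by blast
    thus False using sub sa by simp
  next
    assume "is_MCS (GV k l) ?adj \<sigma>"
    hence "card (numbered_nbrs ?adj \<sigma> a Qv) \<le> card (numbered_nbrs ?adj \<sigma> a Bv)"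
      using a qnot sa unfolding is_MCS_def by (metis (no_types, lifting))
    moreover have "finite (numbered_nbrs ?adj \<sigma> a Qv)" by (simp add: numbered_nbrs_def)
    ultimately show False using psubset_card_mono[OF _ sub] by simp
  qed
qed

end
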